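(* Let $\mathcal{G}$ be a grounded graph class. Then every level-$\mathcal{G}$ weighted graph has a sorted $\mathcal{G}$-safe edge elimination scheme if and only if $\mathcal{G}$ is sandwich monotone.
   Context: All graphs are finite, simple and undirected. A ($k$-)weighted graph is a pair $(G,\omega)$ with $\omega:E(G)\to\{1,\dots,k\}$ surjective for some positive integer $k$. For $1\le i\le k+1$, the $i$-th level graph of $(G,\omega)$ is obtained from $G$ by removing all edges $e$ with $\omega(e)<i$; $(G,\omega)$ is level-$\mathcal{G}$ if all its level graphs belong to $\mathcal{G}$. For $G\in\mathcal{G}$, a set $F\subseteq E(G)$ (resp. edge $e$) is $\mathcal{G}$-safe if $G-F\in\mathcal{G}$ (resp. $G-e\in\mathcal{G}$). $\mathcal{G}$ is grounded if for every $G\in\mathcal{G}$, $E(G)$ is $\mathcal{G}$-safe. $\mathcal{G}$ is sandwich monotone if for each $G\in\mathcal{G}$ and each non-empty $\mathcal{G}$-safe set $F\subseteq E(G)$ there is a $\mathcal{G}$-safe edge in $F$. For an edge ordering $\tau=(e_1,\dots,e_m)$ of $G$ let $G^i_\tau=G-\{e_1,\dots,e_i\}$; for $G\in\mathcal{G}$, a $\mathcal{G}$-safe edge elimination scheme is an edge ordering with $G^i_\tau\in\mathcal{G}$ for all $i\in\{1,\dots,m\}$, and it is sorted (for a weighted graph $(G,\omega)$) if $i<j$ implies $\omega(e_i)\le\omega(e_j)$. *)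

theory Defs
  imports Main
begin

type_synonym 'a graph = "'a set \<times> 'a set set"

definition verts :: "'a graph \<Rightarrow> 'a set" where "verts G = fst G"
definition edges :: "'a graph \<Rightarrow> 'a set set" where "edges G = snd G"

definition is_graph :: "'a graph \<Rightarrow> bool" where
  "is_graph G \<longleftrightarrow> finite (verts G) \<and>
     (\<forall>e\<in>edges G. \<exists>u v. e = {u, v} \<and> u \<noteq> v \<and> u \<in> verts G \<and> v \<in> verts G)"

definition del_edges :: "'a graph \<Rightarrow> 'a set set \<Rightarrow> 'a graph" where
  "del_edges G F = (verts G, edges G - F)"

definition weighted_graph :: "'a graph \<Rightarrow> ('a set \<Rightarrow> nat) \<Rightarrow> nat \<Rightarrow> bool" where
  "weighted_graph G w k \<longleftrightarrow> is_graph G \<and> k \<ge> 1 \<and> w ` edges G = {1..k}"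

definition level_graph :: "'a graph \<Rightarrow> ('a set \<Rightarrow> nat) \<Rightarrow> nat \<Rightarrow> 'a graph" where
  "level_graph G w i = del_edges G {e \<in> edges G. w e < i}"

definition level_class :: "'a graph set \<Rightarrow> 'a graph \<Rightarrow> ('a set \<Rightarrow> nat) \<Rightarrow> nat \<Rightarrow> bool" where
  "level_class C G w k \<longleftrightarrow> (\<forall>i\<in>{1..k+1}. level_graph G w i \<in> C)"

definition safe_set :: "'a graph set \<Rightarrow> 'a graph \<Rightarrow> 'a set set \<Rightarrow> bool" where
  "safe_set C G F \<longleftrightarrow> F \<subseteq> edges G \<and> del_edges G F \<in> C"

definition safe_edge :: "'a graph set \<Rightarrow> 'a graph \<Rightarrow> 'a set \<Rightarrow> bool" where
  "safe_edge C G e \<longleftrightarrow> e \<in> edges G \<and> del_edges G {e} \<in> C"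

definition grounded :: "'a graph set \<Rightarrow> bool" where
  "grounded C \<longleftrightarrow> (\<forall>G\<in>C. safe_set C G (edges G))"

definition sandwich_monotone :: "'a graph set \<Rightarrow> bool" where
  "sandwich_monotone C \<longleftrightarrow>
     (\<forall>G\<in>C. \<forall>F. F \<noteq> {} \<and> safe_set C G F \<longrightarrow> (\<exists>e\<in>F. safe_edge C G e))"

definition edge_ordering :: "'a graph \<Rightarrow> 'a set list \<Rightarrow> bool" where
  "edge_ordering G \<tau> \<longleftrightarrow> distinct \<tau> \<and> set \<tau> = edges G"

definition safe_elim_scheme :: "'a graph set \<Rightarrow> 'a graph \<Rightarrow> 'a set list \<Rightarrow> bool" where
  "safe_elim_scheme C G \<tau> \<longleftrightarrow> G \<in> C \<and> edge_ordering G \<tau> \<and>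
     (\<forall>i\<in>{1..length \<tau>}. del_edges G (set (take i \<tau>)) \<in> C)"

definition sorted_for :: "('a set \<Rightarrow> nat) \<Rightarrow> 'a set list \<Rightarrow> bool" where
  "sorted_for w \<tau> \<longleftrightarrow> (\<forall>i j. i < j \<and> j < length \<tau> \<longrightarrow> w (\<tau> ! i) \<le> w (\<tau> ! j))"

end

theory Submission
  imports Defs
begin

lemma fin_edges: "is_graph H \<Longrightarrow> finite (edges H)"
proof -
  assume a: "is_graph H"
  have "edges H \<subseteq> Pow (verts H)" using a unfolding is_graph_def by fastforce
  moreover have "finite (Pow (verts H))" using a unfolding is_graph_def by simp
  ultimately show ?thesis by (rule finite_subset)
qed

lemma del_del: "del_edges (del_edges H A) B = del_edges H (A \<union> B)"
  by (simp add: del_edges_def verts_def edges_def Diff_Un Diff_eq Int_assoc)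

lemma del_empty[simp]: "del_edges H {} = H"
  by (simp add: del_edges_def verts_def edges_def)

lemma edges_del: "edges (del_edges H A) = edges H - A"
  by (simp add: del_edges_def edges_def)

lemma peel:
  assumes gr: "\<forall>G\<in>C. is_graph G" and sm: "sandwich_monotone C"
  shows "card F = n \<Longrightarrow> finite F \<Longrightarrow> H \<in> C \<Longrightarrow> safe_set C H F \<Longrightarrow>
    \<exists>\<sigma>. distinct \<sigma> \<and> set \<sigma> = F \<and> (\<forall>j\<in>{1..length \<sigma>}. del_edges H (set (take j \<sigma>)) \<in> C)"
proof (induction n arbitrary: F H)
  case 0
  then show ?case by (intro exI[of _ "[]"]) auto
next
  case (Suc n)
  then have "F \<noteq> {}" by auto
  then obtain e where e: "e \<in> F" "safe_edge C H e"
    using sm Suc.prems unfolding sandwich_monotone_def by blast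
  define H' where "H' = del_edges H {e}"
  have H'C: "H' \<in> C" using e unfolding H'_def safe_edge_def by auto
  have "safe_set C H' (F - {e})"
    using Suc.prems(4) e(1) unfolding safe_set_def H'_def
    by (auto simp: edges_del del_del insert_absorb)
  then obtain \<sigma> where s: "distinct \<sigma>" "set \<sigma> = F - {e}"
    "\<forall>j\<in>{1..length \<sigma>}. del_edges H' (set (take j \<sigma>)) \<in> C"
    using Suc.IH[of "F - {e}" H'] Suc.prems e H'C by auto
  show ?case
  proof (intro exI[of _ "e # \<sigma>"] conjI ballI)
    show "distinct (e # \<sigma>)" using s by auto
    show "set (e # \<sigma>) = F" using s e by auto
    fix j assume j: "j \<in> {1..length (e # \<sigma>)}"
    then obtain j' where jj: "j = Suc j'" by (cases j) auto
    have eq: "del_edges H (set (take j (e # \<sigma>))) = del_edges H' (set (take j' \<sigma>))"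
      unfolding jj H'_def by (simp add: del_del)
    show "del_edges H (set (take j (e # \<sigma>))) \<in> C"
    proof (cases "j' = 0")
      case True
      then show ?thesis using eq H'C by simp
    next
      case False
      then show ?thesis using eq s(3) j jj by auto
    qed
  qed
qed

lemma sorted_for_wrt: "sorted_for w \<tau> = sorted_wrt (\<lambda>a b. w a \<le> w b) \<tau>"
  unfolding sorted_for_def sorted_wrt_iff_nth_less by blast

lemma levels:
  assumes gr: "\<forall>G\<in>C. is_graph G" and sm: "sandwich_monotone C"
    and wg: "weighted_graph G w k" and lc: "level_class C G w k"
  shows "i \<ge> 1 \<Longrightarrow> i + n = k + 1 \<Longrightarrow>
    \<exists>\<sigma>. distinct \<sigma> \<and> set \<sigma> = edges (level_graph G w i) \<and> sorted_for w \<sigma> \<and>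
       (\<forall>x\<in>set \<sigma>. w x \<ge> i) \<and>
       (\<forall>j\<in>{1..length \<sigma>}. del_edges (level_graph G w i) (set (take j \<sigma>)) \<in> C)"
proof (induction n arbitrary: i)
  case 0
  have "edges (level_graph G w i) = {}"
  proof -
    have "\<forall>e\<in>edges G. w e \<le> k" using wg unfolding weighted_graph_def by auto
    then show ?thesis using 0 unfolding level_graph_def by (auto simp: edges_del)
  qed
  then show ?case by (intro exI[of _ "[]"]) (auto simp: sorted_for_def)
next
  case (Suc n)
  define H where "H = level_graph G w i"
  define F where "F = {e\<in>edges H. w e = i}"
  have HC: "H \<in> C" using lc Suc.prems unfolding H_def level_class_def by auto
  have H1: "del_edges H F = level_graph G w (i+1)"
    unfolding H_def F_def level_graph_def del_del edges_del
    by (rule arg_cong[where f="del_edges G"]) auto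
  have H1C: "level_graph G w (i+1) \<in> C" using lc Suc.prems unfolding level_class_def by auto
  have finF: "finite F" using fin_edges[of H] gr HC unfolding F_def by auto
  have ss: "safe_set C H F" unfolding safe_set_def using H1 H1C F_def by auto
  obtain \<sigma>1 where s1: "distinct \<sigma>1" "set \<sigma>1 = F"
     "\<forall>j\<in>{1..length \<sigma>1}. del_edges H (set (take j \<sigma>1)) \<in> C"
    using peel[OF gr sm refl finF HC ss] by blast
  obtain \<sigma>2 where s2: "distinct \<sigma>2" "set \<sigma>2 = edges (level_graph G w (i+1))"
     "sorted_for w \<sigma>2" "\<forall>x\<in>set \<sigma>2. w x \<ge> i+1"
     "\<forall>j\<in>{1..length \<sigma>2}. del_edges (level_graph G w (i+1)) (set (take j \<sigma>2)) \<in> C"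
    using Suc.IH[of "i+1"] Suc.prems by auto
  have wF: "\<forall>x\<in>F. w x = i" unfolding F_def by auto
  have disj: "set \<sigma>1 \<inter> set \<sigma>2 = {}" using s1(2) s2(4) wF by fastforce
  have eH: "edges H = F \<union> edges (level_graph G w (i+1))"
    unfolding H_def F_def level_graph_def by (auto simp: edges_del)
  show ?case
  proof (intro exI[of _ "\<sigma>1 @ \<sigma>2"] conjI ballI)
    show "distinct (\<sigma>1 @ \<sigma>2)" using s1 s2 disj by auto
    show "set (\<sigma>1 @ \<sigma>2) = edges (level_graph G w i)" using eH s1 s2 H_def by auto
    show "sorted_for w (\<sigma>1 @ \<sigma>2)" using s2(3,4) s1(2) wF
      unfolding sorted_for_wrt sorted_wrt_append
      by (auto simp: sorted_wrt_iff_nth_less)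
    fix x assume "x \<in> set (\<sigma>1 @ \<sigma>2)"
    then show "i \<le> w x" using s1(2) wF s2(4) by auto
  next
    fix j assume j: "j \<in> {1..length (\<sigma>1 @ \<sigma>2)}"
    show "del_edges (level_graph G w i) (set (take j (\<sigma>1 @ \<sigma>2))) \<in> C"
    proof (cases "j \<le> length \<sigma>1")
      case True
      then show ?thesis using s1(3) j H_def by auto
    next
      case False
      have "set (take j (\<sigma>1 @ \<sigma>2)) = F \<union> set (take (j - length \<sigma>1) \<sigma>2)"
        using False s1(2) by simp
      then have "del_edges (level_graph G w i) (set (take j (\<sigma>1 @ \<sigma>2)))
          = del_edges (level_graph G w (i+1)) (set (take (j - length \<sigma>1) \<sigma>2))"
        using H1 H_def by (metis del_del)
      moreover have "j - length \<sigma>1 \<in> {1..length \<sigma>2}" using j False by auto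
      ultimately show ?thesis using s2(5) by metis
    qed
  qed
qed

theorem proposition3p1:
  fixes C :: "'a graph set"
  assumes "\<forall>G\<in>C. is_graph G"
    and "grounded C"
  shows "(\<forall>G w k. weighted_graph G w k \<and> level_class C G w k \<longrightarrow>
            (\<exists>\<tau>. safe_elim_scheme C G \<tau> \<and> sorted_for w \<tau>))
         \<longleftrightarrow> sandwich_monotone C"
proof
  assume sm: "sandwich_monotone C"
  show "\<forall>G w k. weighted_graph G w k \<and> level_class C G w k \<longrightarrow>
            (\<exists>\<tau>. safe_elim_scheme C G \<tau> \<and> sorted_for w \<tau>)"
  proof (intro allI impI)
    fix G w k assume a: "weighted_graph G w k \<and> level_class C G w k"
    have l1: "level_graph G w 1 = G"
    proof -
      have "\<forall>e\<in>edges G. w e \<ge> 1" using a unfolding weighted_graph_def by auto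
      then have "{e \<in> edges G. w e < 1} = {}" by auto
      then show ?thesis unfolding level_graph_def by (metis del_empty)
    qed
    have GC: "G \<in> C" using a l1 unfolding level_class_def by force
    obtain \<sigma> where s: "distinct \<sigma>" "set \<sigma> = edges (level_graph G w 1)" "sorted_for w \<sigma>"
       "\<forall>j\<in>{1..length \<sigma>}. del_edges (level_graph G w 1) (set (take j \<sigma>)) \<in> C"
      using levels[OF assms(1) sm, of G w k 1 k] a by auto
    show "\<exists>\<tau>. safe_elim_scheme C G \<tau> \<and> sorted_for w \<tau>"
      using s GC l1 unfolding safe_elim_scheme_def edge_ordering_def by auto
  qed
next
  assume H: "\<forall>G w k. weighted_graph G w k \<and> level_class C G w k \<longrightarrow>
            (\<exists>\<tau>. safe_elim_scheme C G \<tau> \<and> sorted_for w \<tau>)"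
  show "sandwich_monotone C"
    unfolding sandwich_monotone_def
  proof (intro ballI allI impI)
    fix G F assume GC: "G \<in> C" and F: "F \<noteq> {} \<and> safe_set C G F"
    define w where "w = (\<lambda>e::'a set. if e \<in> F then 1 else (2::nat))"
    define k where "k = (if F = edges G then 1 else (2::nat))"
    have FE: "F \<subseteq> edges G" "del_edges G F \<in> C" using F unfolding safe_set_def by auto
    have gG: "is_graph G" using assms(1) GC by auto
    have E0: "del_edges G (edges G) \<in> C" using assms(2) GC unfolding grounded_def safe_set_def by auto
    have wg: "weighted_graph G w k"
      unfolding weighted_graph_def
    proof (intro conjI)
      show "w ` edges G = {1..k}"
      proof (cases "F = edges G")
        case True
        then show ?thesis using F unfolding w_def k_def by auto
      next
        case False
        then obtain x where "x \<in> edges G" "x \<notin> F" using FE by auto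
        moreover obtain y where "y \<in> F" using F by auto
        ultimately have "w y \<in> w ` edges G" "w x \<in> w ` edges G" using FE by auto
        moreover have "w y = 1" "w x = 2" using \<open>y \<in> F\<close> \<open>x \<notin> F\<close> unfolding w_def by auto
        ultimately have "1 \<in> w ` edges G" "2 \<in> w ` edges G" by auto
        moreover have "w ` edges G \<subseteq> {1,2}" unfolding w_def by auto
        moreover have "{1..k} = {1,2}" using False unfolding k_def by auto
        ultimately show ?thesis by auto
      qed
    qed (use gG k_def in auto)
    have lc: "level_class C G w k"
      unfolding level_class_def
    proof
      fix i assume i: "i \<in> {1..k+1}"
      define S where "S = {e \<in> edges G. w e < i}"
      have "S = {} \<or> S = F \<or> S = edges G"
        using FE unfolding w_def S_def by auto
      then have "del_edges G S \<in> C" using FE E0 GC by auto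
      then show "level_graph G w i \<in> C" unfolding level_graph_def S_def .
    qed
    obtain \<tau> where t: "safe_elim_scheme C G \<tau>" "sorted_for w \<tau>" using H wg lc by blast
    have so1: "set \<tau> = edges G"
      using t(1) unfolding safe_elim_scheme_def edge_ordering_def by auto
    have "\<tau> \<noteq> []" using so1 F FE by auto
    then have "1 \<in> {1..length \<tau>}" by (cases \<tau>) auto
    then have so: "set \<tau> = edges G" "del_edges G (set (take 1 \<tau>)) \<in> C"
      using so1 t(1) unfolding safe_elim_scheme_def by auto
    obtain f where f: "f \<in> F" using F by auto
    then obtain j where j: "j < length \<tau>" "\<tau> ! j = f" using so FE
      by (metis in_mono in_set_conv_nth)
    have ne: "\<tau> \<noteq> []" using j by auto
    have "w (\<tau> ! 0) \<le> w f"
    proof (cases "j = 0")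
      case True then show ?thesis using j by simp
    next
      case False then show ?thesis using t(2) j unfolding sorted_for_def by auto
    qed
    then have "\<tau> ! 0 \<in> F" using f unfolding w_def by (auto split: if_splits)
    moreover have "take 1 \<tau> = [\<tau> ! 0]" using ne by (cases \<tau>) auto
    moreover have "\<tau> ! 0 \<in> edges G" using ne so by (metis nth_mem length_greater_0_conv)
    ultimately show "\<exists>e\<in>F. safe_edge C G e" using so unfolding safe_edge_def by auto
  qed
qed

end
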